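(* Let $G=(V,E,w)$ be a connected weighted graph with nonnegative edge weights, and let $f_{MST}(G)$ denote the weight of a minimum spanning tree of $G$. For add/remove adjacency over edges (adding one edge $e\notin E$ with an arbitrary nonnegative weight), $$\mathrm{RS}_{f_{MST}}(G)=\max_{S\subset V:\ \exists u\in S,\,v\in V\setminus S,\ \{u,v\}\notin E} w_1(S),$$ where $w_1(S)$ is the minimum weight among edges of $E$ crossing the cut $(S,V\setminus S)$.
   Context: $\mathrm{RS}_{f_{MST}}(G)=\max|f_{MST}((V,E))-f_{MST}((V,E\cup\{e\}))|$, the maximum over $e\in\binom{V}{2}\setminus E$ and over admissible weights of $e$ (weights are nonnegative; in the paper's setting all weights lie in $[0,B]$). *)

theory Defs
  imports Complex_Main
begin

definition pairs :: "'a set \<Rightarrow> 'a set set" where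
  "pairs V = {e. e \<subseteq> V \<and> card e = 2}"

definition simple_graph :: "'a set \<Rightarrow> 'a set set \<Rightarrow> bool" where
  "simple_graph V E \<longleftrightarrow> finite V \<and> E \<subseteq> pairs V"

definition adj_rel :: "'a set set \<Rightarrow> ('a \<times> 'a) set" where
  "adj_rel F = {(a, b). {a, b} \<in> F \<and> a \<noteq> b}"

definition connected_on :: "'a set \<Rightarrow> 'a set set \<Rightarrow> bool" where
  "connected_on V F \<longleftrightarrow> (\<forall>u\<in>V. \<forall>v\<in>V. (u, v) \<in> (adj_rel F)\<^sup>*)"

definition acyclic_edges :: "'a set set \<Rightarrow> bool" where
  "acyclic_edges F \<longleftrightarrow>
     (\<forall>e\<in>F. \<forall>a b. e = {a, b} \<longrightarrow> a \<noteq> b \<longrightarrow> (a, b) \<notin> (adj_rel (F - {e}))\<^sup>*)"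

definition spanning_tree :: "'a set \<Rightarrow> 'a set set \<Rightarrow> 'a set set \<Rightarrow> bool" where
  "spanning_tree V E T \<longleftrightarrow> T \<subseteq> E \<and> connected_on V T \<and> acyclic_edges T"

definition f_MST :: "'a set \<Rightarrow> 'a set set \<Rightarrow> ('a set \<Rightarrow> real) \<Rightarrow> real" where
  "f_MST V E w = Min ((\<lambda>T. \<Sum>e\<in>T. w e) ` {T. spanning_tree V E T})"

definition RS_MST :: "'a set \<Rightarrow> 'a set set \<Rightarrow> ('a set \<Rightarrow> real) \<Rightarrow> real" where
  "RS_MST V E w = Sup {\<bar>f_MST V E w - f_MST V (insert e E) (w(e := x))\<bar> | e x.
                        e \<in> pairs V - E \<and> x \<ge> 0}"

definition w1 :: "'a set \<Rightarrow> 'a set set \<Rightarrow> ('a set \<Rightarrow> real) \<Rightarrow> 'a set \<Rightarrow> real" where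
  "w1 V E w S = Min (w ` {e \<in> E. \<exists>u\<in>S. \<exists>v\<in>V - S. e = {u, v}})"

end

theory Submission
  imports Defs
begin

lemma adj_sym: "(a,b) \<in> adj_rel F \<Longrightarrow> (b,a) \<in> adj_rel F"
proof -
  assume "(a,b) \<in> adj_rel F"
  moreover have "{b,a} = {a,b}" by (rule insert_commute)
  ultimately show ?thesis unfolding adj_rel_def by auto
qed

lemma rtr_sym: "(a,b) \<in> (adj_rel F)\<^sup>* \<Longrightarrow> (b,a) \<in> (adj_rel F)\<^sup>*"
proof (induction rule: rtrancl_induct)
  case base then show ?case by simp
next
  case (step y z)
  show ?case by (rule converse_rtrancl_into_rtrancl[OF adj_sym[OF step(2)] step(3)])
qed

lemma adj_mono: "F \<subseteq> G \<Longrightarrow> adj_rel F \<subseteq> adj_rel G"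
  by (auto simp: adj_rel_def)

lemma rtr_mono: "F \<subseteq> G \<Longrightarrow> (a,b) \<in> (adj_rel F)\<^sup>* \<Longrightarrow> (a,b) \<in> (adj_rel G)\<^sup>*"
  using rtrancl_mono[OF adj_mono] by blast

lemma redundant:
  assumes "F - {g} \<subseteq> G" "g = {a,b}" "(a,b) \<in> (adj_rel G)\<^sup>*"
  shows "(adj_rel F)\<^sup>* \<subseteq> (adj_rel G)\<^sup>*"
proof (rule rtrancl_subset_rtrancl, safe)
  fix p q assume pq: "(p,q) \<in> adj_rel F"
  show "(p,q) \<in> (adj_rel G)\<^sup>*"
  proof (cases "{p,q} = g")
    case True
    then have "(p = a \<and> q = b) \<or> (p = b \<and> q = a)" using assms(2) by (auto simp: doubleton_eq_iff)
    then show ?thesis using assms(3) rtr_sym[OF assms(3)] by blast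
  next
    case False
    then have "(p,q) \<in> adj_rel G" using pq assms(1) by (auto simp: adj_rel_def)
    then show ?thesis by blast
  qed
qed

lemma crossing:
  assumes "(a,b) \<in> R\<^sup>*" "a \<in> S" "b \<notin> S"
  shows "\<exists>c d. (c,d) \<in> R \<and> c \<in> S \<and> d \<notin> S"
  using assms
proof (induction rule: rtrancl_induct)
  case base then show ?case by simp
next
  case (step y z)
  show ?case
  proof (cases "y \<in> S")
    case True then show ?thesis using step.hyps(2) step.prems(2) by blast
  next
    case False then show ?thesis using step.IH step.prems(1) by blast
  qed
qed

lemma splitX:
  assumes "(a,b) \<in> (adj_rel F)\<^sup>*" "g = {c,d}" "(a,b) \<notin> (adj_rel (F-{g}))\<^sup>*"
  shows "((a,c) \<in> (adj_rel (F-{g}))\<^sup>* \<and> (d,b) \<in> (adj_rel (F-{g}))\<^sup>*) \<or>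
         ((a,d) \<in> (adj_rel (F-{g}))\<^sup>* \<and> (c,b) \<in> (adj_rel (F-{g}))\<^sup>*)"
proof -
  define R where "R = adj_rel (F-{g})"
  have symR: "(p,q) \<in> R\<^sup>* \<Longrightarrow> (q,p) \<in> R\<^sup>*" for p q unfolding R_def by (rule rtr_sym)
  have main: "(a,y) \<in> R\<^sup>* \<or> ((a,c) \<in> R\<^sup>* \<and> (d,y) \<in> R\<^sup>*) \<or> ((a,d) \<in> R\<^sup>* \<and> (c,y) \<in> R\<^sup>*)"
    if "(a,y) \<in> (adj_rel F)\<^sup>*" for y
    using that
  proof (induction rule: rtrancl_induct)
    case base then show ?case by simp
  next
    case (step y z)
    show ?case
    proof (cases "{y,z} = g")
      case True
      then have yz: "(y = c \<and> z = d) \<or> (y = d \<and> z = c)" using assms(2) by (simp add: doubleton_eq_iff)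
      then show ?thesis
      proof (elim disjE conjE)
        assume yc: "y = c" and zd: "z = d"
        from step.IH[unfolded yc] show ?thesis
        proof (elim disjE conjE)
          assume "(a,c) \<in> R\<^sup>*" then show ?thesis using zd by simp
        next
          assume h: "(a,c) \<in> R\<^sup>*" "(d,c) \<in> R\<^sup>*"
          have "(a,d) \<in> R\<^sup>*" by (rule rtrancl_trans[OF h(1) symR[OF h(2)]])
          then show ?thesis using zd by simp
        next
          assume "(a,d) \<in> R\<^sup>*" then show ?thesis using zd by simp
        qed
      next
        assume yd: "y = d" and zc: "z = c"
        from step.IH[unfolded yd] show ?thesis
        proof (elim disjE conjE)
          assume "(a,d) \<in> R\<^sup>*" then show ?thesis using zc by simp
        next
          assume "(a,c) \<in> R\<^sup>*" then show ?thesis using zc by simp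
        next
          assume h: "(a,d) \<in> R\<^sup>*" "(c,d) \<in> R\<^sup>*"
          have "(a,c) \<in> R\<^sup>*" by (rule rtrancl_trans[OF h(1) symR[OF h(2)]])
          then show ?thesis using zc by simp
        qed
      qed
    next
      case False
      then have yzR: "(y,z) \<in> R" using step.hyps(2) unfolding R_def adj_rel_def by simp
      from step.IH show ?thesis
      proof (elim disjE conjE)
        assume "(a,y) \<in> R\<^sup>*" then show ?thesis using yzR by (meson rtrancl.rtrancl_into_rtrancl)
      next
        assume "(a,c) \<in> R\<^sup>*" "(d,y) \<in> R\<^sup>*" then show ?thesis using yzR by (meson rtrancl.rtrancl_into_rtrancl)
      next
        assume "(a,d) \<in> R\<^sup>*" "(c,y) \<in> R\<^sup>*" then show ?thesis using yzR by (meson rtrancl.rtrancl_into_rtrancl)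
      qed
    qed
  qed
  have "(a,b) \<notin> R\<^sup>*" using assms(3) unfolding R_def .
  then show ?thesis using main[OF assms(1)] unfolding R_def by blast
qed

lemma tree_exists:
  "finite T \<Longrightarrow> connected_on V T \<Longrightarrow> \<exists>T0\<subseteq>T. connected_on V T0 \<and> acyclic_edges T0"
proof (induction "card T" arbitrary: T rule: less_induct)
  case less
  show ?case
  proof (cases "acyclic_edges T")
    case True thus ?thesis using less by blast
  next
    case False
    then obtain g a b where g: "g \<in> T" "g = {a,b}" "(a,b) \<in> (adj_rel (T-{g}))\<^sup>*"
      unfolding acyclic_edges_def by blast
    have "(adj_rel T)\<^sup>* \<subseteq> (adj_rel (T-{g}))\<^sup>*" by (rule redundant[OF subset_refl g(2,3)])
    then have c: "connected_on V (T-{g})" using less.prems(2) unfolding connected_on_def by blast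
    have lt: "card (T-{g}) < card T" by (rule card_Diff1_less[OF less.prems(1) g(1)])
    have f: "finite (T-{g})" using less.prems(1) by simp
    obtain T0 where "T0 \<subseteq> T - {g}" "connected_on V T0" "acyclic_edges T0"
      using less.hyps[OF lt f c] by blast
    then show ?thesis by blast
  qed
qed

lemma fin_E: "simple_graph V E \<Longrightarrow> finite E"
proof -
  assume a: "simple_graph V E"
  then have "E \<subseteq> Pow V" by (auto simp: simple_graph_def pairs_def)
  moreover have "finite (Pow V)" using a by (simp add: simple_graph_def)
  ultimately show ?thesis by (rule finite_subset)
qed

lemma fmst_opt:
  assumes "finite E" "connected_on V E" "\<forall>e\<in>E. w e \<ge> 0"
  shows "\<exists>T. spanning_tree V E T \<and> f_MST V E w = sum w T"
proof -
  have fin: "finite {T. spanning_tree V E T}"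
  proof (rule finite_subset)
    show "{T. spanning_tree V E T} \<subseteq> Pow E" by (auto simp: spanning_tree_def)
  qed (use assms(1) in simp)
  obtain T0 where "T0 \<subseteq> E" "connected_on V T0" "acyclic_edges T0"
    using tree_exists[OF assms(1,2)] by blast
  then have ne: "{T. spanning_tree V E T} \<noteq> {}" by (auto simp: spanning_tree_def)
  have "f_MST V E w \<in> (\<lambda>T. sum w T) ` {T. spanning_tree V E T}"
    unfolding f_MST_def using fin ne by (intro Min_in) auto
  then show ?thesis by auto
qed

lemma fmst_le:
  assumes "finite E" "\<forall>e\<in>E. w e \<ge> 0" "T \<subseteq> E" "connected_on V T"
  shows "f_MST V E w \<le> sum w T"
proof -
  have fin: "finite {T. spanning_tree V E T}"
  proof (rule finite_subset)
    show "{T. spanning_tree V E T} \<subseteq> Pow E" by (auto simp: spanning_tree_def)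
  qed (use assms(1) in simp)
  have fT: "finite T" using assms(1,3) finite_subset by blast
  obtain T0 where T0: "T0 \<subseteq> T" "connected_on V T0" "acyclic_edges T0"
    using tree_exists[OF fT assms(4)] by blast
  then have "spanning_tree V E T0" using assms(3) by (auto simp: spanning_tree_def)
  then have "f_MST V E w \<le> sum w T0"
    unfolding f_MST_def using fin by (intro Min_le) auto
  also have "\<dots> \<le> sum w T" using T0(1) fT assms(2,3) by (intro sum_mono2) auto
  finally show ?thesis .
qed

lemma sum_insert_le: "finite X \<Longrightarrow> 0 \<le> (h::'b \<Rightarrow> real) f \<Longrightarrow> sum h (insert f X) \<le> h f + sum h X"
  by (simp add: sum.insert_if sum_nonneg)

lemma w1_facts:
  assumes "simple_graph V E" "connected_on V E" "\<forall>e\<in>E. w e \<ge> 0" "u \<in> S" "v \<in> V - S" "S \<subseteq> V"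
  shows "\<exists>f\<in>E. (\<exists>c\<in>S. \<exists>d\<in>V-S. f = {c,d}) \<and> w f = w1 V E w S"
    and "\<forall>f\<in>E. (\<exists>c\<in>S. \<exists>d\<in>V-S. f = {c,d}) \<longrightarrow> w1 V E w S \<le> w f"
    and "0 \<le> w1 V E w S"
proof -
  let ?C = "{e \<in> E. \<exists>u\<in>S. \<exists>v\<in>V - S. e = {u, v}}"
  have finC: "finite ?C" using fin_E[OF assms(1)] by simp
  have uV: "u \<in> V" using assms(4,6) by blast
  have vV: "v \<in> V" using assms(5) by blast
  have "(u,v) \<in> (adj_rel E)\<^sup>*" using assms(2) uV vV unfolding connected_on_def by blast
  from crossing[OF this assms(4)] assms(5) obtain c d where cd: "(c,d) \<in> adj_rel E" "c \<in> S" "d \<notin> S"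
    by blast
  have cdE: "{c,d} \<in> E" using cd(1) unfolding adj_rel_def by simp
  have "{c,d} \<subseteq> V" using cdE assms(1) unfolding simple_graph_def pairs_def by blast
  then have dV: "d \<in> V" by simp
  have "{c,d} \<in> ?C" using cdE cd(2,3) dV by blast
  then have ne: "?C \<noteq> {}" by blast
  have mem: "w1 V E w S \<in> w ` ?C" unfolding w1_def using finC ne by (intro Min_in) simp_all
  then obtain f where f: "f \<in> ?C" "w1 V E w S = w f" by blast
  then show "\<exists>f\<in>E. (\<exists>c\<in>S. \<exists>d\<in>V-S. f = {c,d}) \<and> w f = w1 V E w S" by auto
  show "\<forall>f\<in>E. (\<exists>c\<in>S. \<exists>d\<in>V-S. f = {c,d}) \<longrightarrow> w1 V E w S \<le> w f"
  proof (intro ballI impI)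
    fix f assume "f \<in> E" "\<exists>c\<in>S. \<exists>d\<in>V-S. f = {c,d}"
    then have "f \<in> ?C" by blast
    then have "w f \<in> w ` ?C" by (rule imageI)
    then show "w1 V E w S \<le> w f" unfolding w1_def using finC by (intro Min_le) simp_all
  qed
  have "0 \<le> w f" using f(1) assms(3) by blast
  then show "0 \<le> w1 V E w S" using f(2) by simp
qed


lemma basics:
  assumes "simple_graph V E" "connected_on V E" "\<forall>e\<in>E. w e \<ge> 0" "e \<in> pairs V - E" "x \<ge> (0::real)"
  shows "finite (insert e E)" "connected_on V (insert e E)" "\<forall>t\<in>insert e E. (w(e:=x)) t \<ge> 0"
    "f_MST V (insert e E) (w(e:=x)) \<le> f_MST V E w"
proof -
  show fE': "finite (insert e E)" using fin_E[OF assms(1)] by simp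
  show cE': "connected_on V (insert e E)" unfolding connected_on_def
  proof (intro ballI)
    fix p q assume "p \<in> V" "q \<in> V"
    then have "(p,q) \<in> (adj_rel E)\<^sup>*" using assms(2) unfolding connected_on_def by blast
    then show "(p,q) \<in> (adj_rel (insert e E))\<^sup>*" by (rule rtr_mono[rotated]) blast
  qed
  show nn: "\<forall>t\<in>insert e E. (w(e:=x)) t \<ge> 0" using assms(3,5) by auto
  obtain T where T: "spanning_tree V E T" "f_MST V E w = sum w T"
    using fmst_opt[OF fin_E[OF assms(1)] assms(2,3)] by blast
  have "e \<notin> T" using T(1) assms(4) by (auto simp: spanning_tree_def)
  then have "sum (w(e:=x)) T = sum w T" by (intro sum.cong) auto
  moreover have "f_MST V (insert e E) (w(e:=x)) \<le> sum (w(e:=x)) T"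
    using T(1) by (intro fmst_le[OF fE' nn]) (auto simp: spanning_tree_def)
  ultimately show "f_MST V (insert e E) (w(e:=x)) \<le> f_MST V E w" using T(2) by simp
qed

lemma part1:
  assumes G: "simple_graph V E" "connected_on V E" "\<forall>e\<in>E. w e \<ge> 0"
    and e: "e \<in> pairs V - E" and x: "x \<ge> (0::real)"
  shows "\<exists>S. S \<subset> V \<and> (\<exists>u\<in>S. \<exists>v\<in>V - S. {u,v} \<notin> E) \<and>
     f_MST V E w - f_MST V (insert e E) (w(e:=x)) \<le> w1 V E w S"
proof -
  note B = basics[OF G e x]
  have finE: "finite E" using fin_E[OF G(1)] .
  obtain u v where uv: "e = {u,v}" "u \<noteq> v" using e by (auto simp: pairs_def card_2_iff)
  have uvV: "u \<in> V" "v \<in> V" using e uv by (auto simp: pairs_def)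
  have ne: "{u,v} \<notin> E" using e uv by auto
  let ?w' = "w(e:=x)"
  obtain T' where T': "spanning_tree V (insert e E) T'" "f_MST V (insert e E) ?w' = sum ?w' T'"
    using fmst_opt[OF B(1,2,3)] by blast
  have finT': "finite T'" using T'(1) B(1) finite_subset by (auto simp: spanning_tree_def)
  show ?thesis
  proof (cases "e \<in> T'")
    case False
    have "sum ?w' T' = sum w T'" using False by (intro sum.cong) auto
    moreover have "f_MST V E w \<le> sum w T'"
      using T'(1) False by (intro fmst_le[OF finE G(3)]) (auto simp: spanning_tree_def)
    ultimately have le: "f_MST V E w - f_MST V (insert e E) ?w' \<le> 0" using T'(2) by simp
    have "0 \<le> w1 V E w {u}" using w1_facts(3)[OF G, of u "{u}" v] uvV uv by auto
    moreover have "{u} \<subset> V" using uvV uv by auto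
    ultimately show ?thesis using le ne uvV uv by (intro exI[of _ "{u}"]) auto
  next
    case True
    let ?R0 = "adj_rel (T'-{e})"
    have nc: "(u,v) \<notin> ?R0\<^sup>*" using T'(1) True uv unfolding spanning_tree_def acyclic_edges_def by blast
    define S where "S = {y\<in>V. (u,y) \<in> ?R0\<^sup>*}"
    have uS: "u \<in> S" using uvV by (auto simp: S_def)
    have vS: "v \<in> V - S" using uvV nc by (auto simp: S_def)
    have SV: "S \<subseteq> V" by (auto simp: S_def)
    obtain f where f: "f \<in> E" "\<exists>c\<in>S. \<exists>d\<in>V-S. f = {c,d}" "w f = w1 V E w S"
      using w1_facts(1)[OF G uS vS SV] by blast
    then obtain c d where cd: "c \<in> S" "d \<in> V - S" "f = {c,d}" by blast
    have "(u,d) \<in> (adj_rel T')\<^sup>*" using T'(1) uvV cd unfolding spanning_tree_def connected_on_def by blast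
    moreover have "(u,d) \<notin> ?R0\<^sup>*" using cd by (auto simp: S_def)
    ultimately have "(v,d) \<in> ?R0\<^sup>*" using splitX[of u d T' e u v] uv by blast
    define T'' where "T'' = insert f (T'-{e})"
    have sub: "T' - {e} \<subseteq> T''" by (auto simp: T''_def)
    have "(u,c) \<in> (adj_rel T'')\<^sup>*" using cd(1) rtr_mono[OF sub] by (auto simp: S_def)
    moreover have "(c,d) \<in> adj_rel T''" using cd by (auto simp: T''_def adj_rel_def)
    moreover have "(d,v) \<in> (adj_rel T'')\<^sup>*" using rtr_sym[OF rtr_mono[OF sub \<open>(v,d) \<in> ?R0\<^sup>*\<close>]] .
    ultimately have "(u,v) \<in> (adj_rel T'')\<^sup>*" by (meson rtrancl_trans r_into_rtrancl)
    then have "(adj_rel T')\<^sup>* \<subseteq> (adj_rel T'')\<^sup>*" using redundant[OF sub uv(1)] by blast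
    then have conn: "connected_on V T''" using T'(1) unfolding spanning_tree_def connected_on_def by blast
    have T''E: "T'' \<subseteq> E" using T'(1) f(1) by (auto simp: T''_def spanning_tree_def)
    have "f_MST V E w \<le> sum w T''" using fmst_le[OF finE G(3) T''E conn] .
    also have "\<dots> \<le> w f + sum w (T'-{e})" unfolding T''_def
      using finT' f(1) G(3) by (intro sum_insert_le) auto
    also have "sum w (T'-{e}) = sum ?w' (T'-{e})" by (intro sum.cong) auto
    also have "\<dots> = sum ?w' T' - x" using True finT' by (simp add: sum_diff1 fun_upd_same del: fun_upd_apply)
    finally have "f_MST V E w - f_MST V (insert e E) ?w' \<le> w1 V E w S" using T'(2) f(3) x by simp
    moreover have "S \<subset> V" using SV vS by auto
    ultimately show ?thesis using uS vS ne by blast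
  qed
qed

lemma part2:
  assumes G: "simple_graph V E" "connected_on V E" "\<forall>e\<in>E. w e \<ge> 0"
    and S: "S \<subset> V" "u \<in> S" "v \<in> V - S" "{u,v} \<notin> E"
  shows "{u,v} \<in> pairs V - E \<and>
     w1 V E w S \<le> f_MST V E w - f_MST V (insert {u,v} E) (w({u,v}:=0))"
proof -
  have finE: "finite E" using fin_E[OF G(1)] .
  define e where "e = {u,v}"
  have uv: "u \<noteq> v" "u \<in> V" "v \<in> V" using S by auto
  have eP: "e \<in> pairs V - E" using uv S(4) by (auto simp: e_def pairs_def)
  note B = basics[OF G eP order_refl]
  let ?w' = "w(e:=0)"
  obtain T where T: "spanning_tree V E T" "f_MST V E w = sum w T"
    using fmst_opt[OF finE G(2,3)] by blast
  have TE: "T \<subseteq> E" using T(1) by (auto simp: spanning_tree_def)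
  have finT: "finite T" using TE finE finite_subset by blast
  have "(u,v) \<in> (adj_rel T)\<^sup>*" using T(1) uv unfolding spanning_tree_def connected_on_def by blast
  then obtain F where F: "F \<subseteq> T \<and> (u,v) \<in> (adj_rel F)\<^sup>*"
    "\<forall>F'. F' \<subseteq> T \<and> (u,v) \<in> (adj_rel F')\<^sup>* \<longrightarrow> card F \<le> card F'"
    using ex_has_least_nat[of "\<lambda>F. F \<subseteq> T \<and> (u,v) \<in> (adj_rel F)\<^sup>*" T card] by blast
  have finF: "finite F" using F(1) finT finite_subset by blast
  obtain c d where cd: "(c,d) \<in> adj_rel F" "c \<in> S" "d \<notin> S"
    using crossing[of u v "adj_rel F" S] F(1) S by blast
  define g where "g = {c,d}"
  have gF: "g \<in> F" using cd by (auto simp: g_def adj_rel_def)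
  have gE: "g \<in> E" using gF F(1) TE by blast
  have dV: "d \<in> V" using gE G(1) by (auto simp: g_def simple_graph_def pairs_def)
  have SV: "S \<subseteq> V" using S(1) by blast
  have gc: "\<exists>c'\<in>S. \<exists>d'\<in>V-S. g = {c',d'}" using cd dV g_def by blast
  have wg: "w1 V E w S \<le> w g"
    using w1_facts(2)[OF G S(2,3) SV] gE gc by blast
  have "card (F - {g}) < card F" using gF finF by (meson card_Diff1_less)
  have nc: "(u,v) \<notin> (adj_rel (F-{g}))\<^sup>*"
  proof
    assume "(u,v) \<in> (adj_rel (F-{g}))\<^sup>*"
    moreover have "F - {g} \<subseteq> T" using F(1) by blast
    ultimately have "card F \<le> card (F-{g})" using F(2) by blast
    then show False using \<open>card (F - {g}) < card F\<close> by simp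
  qed
  define T' where "T' = insert e (T - {g})"
  have sub: "F - {g} \<subseteq> T'" using F(1) by (auto simp: T'_def)
  have sub2: "T - {g} \<subseteq> T'" by (auto simp: T'_def)
  have e_adj1: "(u,v) \<in> adj_rel T'" using uv by (auto simp: T'_def e_def adj_rel_def)
  have e_adj: "(u,v) \<in> adj_rel T'" "(v,u) \<in> adj_rel T'" using e_adj1 adj_sym[OF e_adj1] by blast+
  have "(c,d) \<in> (adj_rel T')\<^sup>*"
    using splitX[OF conjunct2[OF F(1)] g_def nc]
  proof (elim disjE conjE)
    assume a: "(u,c) \<in> (adj_rel (F-{g}))\<^sup>*" "(d,v) \<in> (adj_rel (F-{g}))\<^sup>*"
    have x1: "(c,u) \<in> (adj_rel T')\<^sup>*" using rtr_sym[OF rtr_mono[OF sub a(1)]] .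
    have x2: "(v,d) \<in> (adj_rel T')\<^sup>*" using rtr_sym[OF rtr_mono[OF sub a(2)]] .
    show ?thesis by (rule rtrancl_trans[OF rtrancl_trans[OF x1 r_into_rtrancl[OF e_adj(1)]] x2])
  next
    assume a: "(u,d) \<in> (adj_rel (F-{g}))\<^sup>*" "(c,v) \<in> (adj_rel (F-{g}))\<^sup>*"
    have x1: "(u,d) \<in> (adj_rel T')\<^sup>*" using rtr_mono[OF sub a(1)] .
    have x2: "(c,v) \<in> (adj_rel T')\<^sup>*" using rtr_mono[OF sub a(2)] .
    show ?thesis by (rule rtrancl_trans[OF rtrancl_trans[OF x2 r_into_rtrancl[OF e_adj(2)]] x1])
  qed
  then have "(adj_rel T)\<^sup>* \<subseteq> (adj_rel T')\<^sup>*" using redundant[OF sub2 g_def] by blast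
  then have conn: "connected_on V T'" using T(1) unfolding spanning_tree_def connected_on_def by blast
  have T'E: "T' \<subseteq> insert e E" using TE by (auto simp: T'_def)
  have eT: "e \<notin> T" using TE eP by auto
  have "f_MST V (insert e E) ?w' \<le> sum ?w' T'" using fmst_le[OF B(1,3) T'E conn] .
  also have "\<dots> \<le> ?w' e + sum ?w' (T - {g})" unfolding T'_def
    using finT by (intro sum_insert_le) auto
  also have "sum ?w' (T - {g}) = sum w (T - {g})" using eT by (intro sum.cong) auto
  also have "\<dots> = sum w T - w g" using gF F(1) finT by (subst sum_diff1) auto
  finally have fin1: "f_MST V (insert e E) ?w' \<le> ?w' e + (sum w T - w g)" .
  have z: "?w' e = 0" by simp
  have "f_MST V (insert e E) ?w' \<le> sum w T - w g" using fin1 unfolding z by simp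
  then show ?thesis using eP T(2) wg unfolding e_def by linarith
qed


theorem mainTheorem7:
  fixes V :: "'a set" and E :: "'a set set" and w :: "'a set \<Rightarrow> real"
  assumes "simple_graph V E"
    and "connected_on V E"
    and "\<forall>e\<in>E. w e \<ge> 0"
  shows "RS_MST V E w =
         Sup (w1 V E w ` {S. S \<subset> V \<and> (\<exists>u\<in>S. \<exists>v\<in>V - S. {u, v} \<notin> E)})"
proof -
  note G = assms
  define L where "L = {\<bar>f_MST V E w - f_MST V (insert e E) (w(e := x))\<bar> | e x.
                        e \<in> pairs V - E \<and> x \<ge> 0}"
  define SS where "SS = {S. S \<subset> V \<and> (\<exists>u\<in>S. \<exists>v\<in>V - S. {u, v} \<notin> E)}"
  have LR: "\<exists>S\<in>SS. l \<le> w1 V E w S" if lL: "l \<in> L" for l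
  proof -
    from lL obtain e x where ex: "l = \<bar>f_MST V E w - f_MST V (insert e E) (w(e := x))\<bar>"
      "e \<in> pairs V - E" "x \<ge> 0" unfolding L_def by blast
    have "f_MST V (insert e E) (w(e := x)) \<le> f_MST V E w" using basics(4)[OF G ex(2,3)] .
    then have leq: "l = f_MST V E w - f_MST V (insert e E) (w(e := x))" using ex(1) by simp
    obtain S where S: "S \<subset> V" "\<exists>u\<in>S. \<exists>v\<in>V - S. {u,v} \<notin> E"
      "f_MST V E w - f_MST V (insert e E) (w(e:=x)) \<le> w1 V E w S"
      using part1[OF G ex(2,3)] by blast
    have "S \<in> SS" using S(1,2) unfolding SS_def by blast
    then show ?thesis using S(3) leq by blast
  qed
  have RL: "\<exists>l\<in>L. w1 V E w S \<le> l" if SS: "S \<in> SS" for S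
  proof -
    from SS obtain u v where uv: "S \<subset> V" "u \<in> S" "v \<in> V - S" "{u,v} \<notin> E" unfolding SS_def by blast
    note p = part2[OF G uv]
    have mem: "\<bar>f_MST V E w - f_MST V (insert {u,v} E) (w({u,v}:=0))\<bar> \<in> L"
      unfolding L_def using p by blast
    have "w1 V E w S \<le> \<bar>f_MST V E w - f_MST V (insert {u,v} E) (w({u,v}:=0))\<bar>"
      using p by linarith
    then show ?thesis using mem by blast
  qed
  have "SS \<subseteq> Pow V" unfolding SS_def by blast
  moreover have "finite (Pow V)" using G(1) unfolding simple_graph_def by simp
  ultimately have finSS: "finite SS" by (rule finite_subset)
  have lhs: "RS_MST V E w = Sup L" unfolding RS_MST_def L_def by (rule refl)
  have rhs: "Sup (w1 V E w ` {S. S \<subset> V \<and> (\<exists>u\<in>S. \<exists>v\<in>V - S. {u, v} \<notin> E)}) = Sup (w1 V E w ` SS)"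
    unfolding SS_def by (rule refl)
  show ?thesis
  proof (cases "SS = {}")
    case True
    then have "L = {}" using LR by blast
    then show ?thesis using True lhs rhs by simp
  next
    case False
    let ?R = "w1 V E w ` SS"
    have bR: "bdd_above ?R" using finSS by simp
    have Rne: "?R \<noteq> {}" using False by simp
    have Lne: "L \<noteq> {}" using False RL by blast
    have Lb: "\<forall>l\<in>L. l \<le> Sup ?R"
    proof
      fix l assume "l \<in> L"
      then obtain S where S: "S \<in> SS" "l \<le> w1 V E w S" using LR by blast
      have "w1 V E w S \<le> Sup ?R" using bR S(1) by (intro cSup_upper) simp_all
      then show "l \<le> Sup ?R" using S(2) by linarith
    qed
    then have bL: "bdd_above L" unfolding bdd_above_def by blast
    have "Sup L \<le> Sup ?R" using Lne Lb by (intro cSup_least) simp_all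
    moreover have "Sup ?R \<le> Sup L"
    proof (rule cSup_least[OF Rne])
      fix r assume "r \<in> ?R"
      then obtain S where S: "S \<in> SS" "r = w1 V E w S" by blast
      then obtain l where l: "l \<in> L" "r \<le> l" using RL by blast
      have "l \<le> Sup L" using bL l(1) by (rule cSup_upper[rotated])
      then show "r \<le> Sup L" using l(2) by linarith
    qed
    ultimately show ?thesis using lhs rhs by simp
  qed
qed

end
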